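(* There exist constants $C_0,C_1,C_2,C>0$ independent of $(\lambda,\sigma,\mu)$ such that for all small $\mu>0$, all $\lambda\in[\lambda^*/2,2\lambda^*]$, $\sigma\in[\sigma^*/2,2\sigma^*]$, every $i\in\{0,\dots,k-1\}$ and $\rho\in\mathbb{R}$: in $\overline{\mathbf{B}}\setminus\overline{\Omega}_i$, $$\frac{C_0}{\mu^{1/2}}\le d_i\le d_{i^*}\le C_1d_i,\qquad \Big|\frac{1}{d_i^\rho}-\frac{1}{d_{i^*}^\rho}\Big|\le\frac{C}{\mu^{1/2}d_{i^*}^{\rho+1}};$$ and in $\overline{\Omega}_i$, $$d_i\le d_{i^*},\qquad \frac{C_2}{\mu^{1/2}}\le d_{i^*}.$$
   Context: Let $\mathbf{B}$ be the open unit ball in $\mathbb{R}^3$. Let $K$ be a radial nonnegative function, $K(x)=K(|x|)$, with $K\in C^0([0,1])\cap C^{1,1}((0,1])$, $K(1)=1$, $K'(1)>0$. Let $\Phi(x)=3^{1/4}(1+|x|^2)^{-1/2}$. Set $A_1=\frac16\int_{\mathbb{R}^3}\Phi^6\,dx$, $A_2=\frac14\int_{\mathbb{R}^3}\Phi(0)\Phi^5\,dx$ and, for $\sigma>0$, $L(\sigma)=\sum_{j\in\mathbb{Z}\setminus\{0\}}\big(\frac{1}{|j\pi|}-\frac{1}{((j\pi)^2+\sigma^2)^{1/2}}\big)$. The system $L(\sigma)=0$, $K'(1)A_1\lambda=A_2L'(\sigma)$ has a unique positive root, denoted $(\lambda^*,\sigma^* )$. For $\mu>0$ small let $k=\lfloor\mu^{-1/2}\rfloor$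 and $\mathbf{m}_i=(\cos\frac{2\pi i}{k},\sin\frac{2\pi i}{k},0)$, $i=0,\dots,k-1$. For $\lambda\in[\lambda^*/2,2\lambda^*]$, $\sigma\in[\sigma^*/2,2\sigma^*]$ put $\varepsilon=\mu/\lambda$, $r=1-\sigma\mu^{1/2}$, $d_i(x)=\sqrt{1+|x-r\mathbf{m}_i|^2/\varepsilon^2}$, $d_{i^*}(x)=\sqrt{1+|rx-\mathbf{m}_i|^2/\varepsilon^2}$, and $\Omega_i=\{x\in\mathbf{B}:x\cdot\mathbf{m}_i=\max_{0\le j\le k-1}x\cdot\mathbf{m}_j\}$. *)

theory Defs
  imports "HOL-Analysis.Analysis"
begin

definition mvec :: "nat \<Rightarrow> nat \<Rightarrow> real^3" where
  "mvec k i = vector [cos (2 * pi * real i / real k), sin (2 * pi * real i / real k), 0]"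

definition Omega :: "nat \<Rightarrow> nat \<Rightarrow> (real^3) set" where
  "Omega k i = {x \<in> ball 0 1. x \<bullet> mvec k i = Max ((\<lambda>j. x \<bullet> mvec k j) ` {..<k})}"

definition dfun :: "real \<Rightarrow> real \<Rightarrow> real^3 \<Rightarrow> real^3 \<Rightarrow> real" where
  "dfun eps r m x = sqrt (1 + (norm (x - r *\<^sub>R m))^2 / eps^2)"

definition dstar :: "real \<Rightarrow> real \<Rightarrow> real^3 \<Rightarrow> real^3 \<Rightarrow> real" where
  "dstar eps r m x = sqrt (1 + (norm (r *\<^sub>R x - m))^2 / eps^2)"

end

theory Submission
  imports Defs
begin

lemma mvec_inner: "mvec k i \<bullet> mvec k j = cos (2*pi*real i/real k - 2*pi*real j/real k)"
  unfolding mvec_def by (simp add: inner_vec_def sum_3 vector_3 cos_diff)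
lemma mvec_norm: "norm (mvec k i) = 1"
  unfolding norm_eq_sqrt_inner mvec_inner by simp
lemma sin_half: fixes y :: real assumes "0 \<le> y" "y \<le> 8/5" shows "y/2 \<le> sin y"
proof -
  have "\<bar>sin y - (\<Sum>m<3. sin_coeff m * y ^ m)\<bar> \<le> inverse (fact 3) * \<bar>y\<bar> ^ 3"
    by (rule Maclaurin_sin_bound)
  hence h: "\<bar>sin y - y\<bar> \<le> y^3/6" using assms by (simp add: sin_coeff_def eval_nat_numeral fact_numeral)
  have "y*y \<le> 3" using mult_mono[of y "8/5" y "8/5"] assms by simp
  hence "y*(y*y) \<le> y*3" using assms by (simp add: mult_left_mono)
  hence "y^3/6 \<le> y/2" by (simp add: power3_eq_cube)
  thus ?thesis using h by linarith
qed

lemma one_minus_cos_bound: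
  assumes "k \<ge> (2::nat)"
  shows "4 / (real k)^2 \<le> 1 - cos (2*pi/real k)"
proof -
  define y where "y = pi / real k"
  have y0: "0 \<le> y" unfolding y_def by simp
  have "y \<le> pi/2" unfolding y_def using assms by (simp add: field_simps)
  moreover have "pi \<le> 16/5" using pi_approx(2) by simp
  ultimately have y1: "y \<le> 8/5" by linarith
  have s: "y/2 \<le> sin y" using sin_half y0 y1 by blast
  have "(y/2)^2 \<le> (sin y)^2" using s y0 by (simp add: power_mono)
  hence "y^2/2 \<le> 1 - cos (2*y)" by (simp add: cos_double_sin power_divide)
  moreover have "4 / (real k)^2 \<le> y^2/2"
  proof -
    have "3^2 \<le> pi^2" using pi_gt3 by (intro power_mono) auto
    hence "8 \<le> pi^2" by simp
    hence "8 / (2*(real k)^2) \<le> pi^2 / (2*(real k)^2)" by (intro divide_right_mono) auto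
    thus ?thesis unfolding y_def by (simp add: power_divide)
  qed
  moreover have "2*y = 2*pi/real k" unfolding y_def by simp
  ultimately show ?thesis by simp
qed

lemma cos_angle_bound:
  assumes "k \<ge> (2::nat)" "i < k" "j < k" "i \<noteq> j"
  shows "cos (2*pi*real i/real k - 2*pi*real j/real k) \<le> cos (2*pi/real k)"
proof -
  have main: "cos (2*pi*real d/real k) \<le> cos (2*pi/real k)" if "1 \<le> d" "d < k" for d
  proof (cases "2*d \<le> k")
    case True
    show ?thesis
      apply (rule cos_monotone_0_pi_le)
      using True that assms by (auto simp: field_simps)
  next
    case False
    have "cos (2*pi*real d/real k) = cos (2*pi - 2*pi*real d/real k)" by simp
    also have "2*pi - 2*pi*real d/real k = 2*pi*real (k-d)/real k"
      using that assms by (simp add: field_simps of_nat_diff)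
    also have "cos (2*pi*real (k-d)/real k) \<le> cos (2*pi/real k)"
    proof (rule cos_monotone_0_pi_le)
      have "1 \<le> real (k-d)" using that by simp
      hence "2*pi*1 \<le> 2*pi*real (k-d)" by (intro mult_left_mono) auto
      thus "2*pi/real k \<le> 2*pi*real (k-d)/real k" using assms by (simp add: divide_right_mono)
      show "0 \<le> 2*pi/real k" by simp
      show "2*pi*real (k-d)/real k \<le> pi" using False that assms by (auto simp: field_simps of_nat_diff)
    qed
    finally show ?thesis .
  qed
  show ?thesis
  proof (cases "j < i")
    case True
    have "2*pi*real i/real k - 2*pi*real j/real k = 2*pi*real (i-j)/real k"
      using True assms by (simp add: field_simps of_nat_diff)
    thus ?thesis using main[of "i-j"] True assms by simp
  next
    case False
    hence "i < j" using assms by simp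
    have "cos (2*pi*real i/real k - 2*pi*real j/real k) = cos (2*pi*real j/real k - 2*pi*real i/real k)"
      by (metis cos_minus minus_diff_eq)
    also have "2*pi*real j/real k - 2*pi*real i/real k = 2*pi*real (j-i)/real k"
      using \<open>i<j\<close> assms by (simp add: field_simps of_nat_diff)
    finally show ?thesis using main[of "j-i"] \<open>i<j\<close> assms by simp
  qed
qed

lemma geom_sep:
  fixes x m m' :: "real^3"
  assumes "norm m = 1" "norm m' = 1" "x \<bullet> m < x \<bullet> m'" "0 < r"
  shows "r^2 * (1 - m \<bullet> m') / 2 \<le> (norm (x - r *\<^sub>R m))^2"
proof -
  define v where "v = m' - m"
  define c where "c = m \<bullet> m'"
  have mm: "m \<bullet> m = 1" "m' \<bullet> m' = 1" using assms by (simp_all add: norm_eq_1)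
  have nv: "(norm v)^2 = 2*(1-c)" unfolding v_def c_def power2_norm_eq_inner
    using mm by (simp add: inner_diff inner_commute)
  have "(x - r *\<^sub>R m) \<bullet> v = x \<bullet> m' - x \<bullet> m + r*(1-c)"
    unfolding v_def c_def using mm by (simp add: inner_diff inner_commute algebra_simps)
  hence ip: "r*(1-c) < (x - r *\<^sub>R m) \<bullet> v" using assms by simp
  have c1: "c \<le> 1" unfolding c_def using norm_cauchy_schwarz[of m m'] assms by simp
  hence "0 \<le> r*(1-c)" using assms by simp
  hence "(r*(1-c))^2 \<le> ((x - r *\<^sub>R m) \<bullet> v)^2" using ip by (simp add: power_mono)
  also have "\<dots> \<le> (norm (x - r *\<^sub>R m) * norm v)^2"
    using Cauchy_Schwarz_ineq2[of "x - r *\<^sub>R m" v]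
    by (metis abs_ge_zero power_mono power2_abs)
  finally have h: "r^2*(1-c)^2 \<le> (norm (x - r *\<^sub>R m))^2 * (2*(1-c))"
    by (simp add: power_mult_distrib nv)
  show ?thesis
  proof (cases "c = 1")
    case True thus ?thesis unfolding c_def by simp
  next
    case False
    hence cp: "0 < 1 - c" using c1 by simp
    have "r^2*(1-c)*(1-c) \<le> ((norm (x - r *\<^sub>R m))^2 * 2) * (1-c)"
      using h by (simp add: power2_eq_square algebra_simps)
    hence "r^2*(1-c) \<le> (norm (x - r *\<^sub>R m))^2 * 2" using cp
      by (meson mult_le_cancel_right_pos)
    thus ?thesis unfolding c_def by simp
  qed
qed

lemma geom_ident:
  fixes x m :: "real^3"
  assumes "norm m = 1"
  shows "(norm (r *\<^sub>R x - m))^2 = (norm (x - r *\<^sub>R m))^2 + (1 - r^2)*(1 - (norm x)^2)"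
proof -
  have "m \<bullet> m = 1" using assms by (simp add: norm_eq_1)
  thus ?thesis unfolding power2_norm_eq_inner
    by (simp add: inner_diff inner_commute algebra_simps power2_eq_square)
qed

lemma in_closure_Omega:
  assumes "x \<in> cball (0::real^3) 1" "x \<bullet> mvec k i = Max ((\<lambda>j. x \<bullet> mvec k j) ` {..<k})" "i < k"
  shows "x \<in> closure (Omega k i)"
  unfolding closure_approachable
proof (intro allI impI)
  fix e :: real assume e: "e > 0"
  define t where "t = 1 - min e 1 / 2"
  have t: "0 < t" "t < 1" "1 - t \<le> e/2" using e unfolding t_def by auto
  have ge: "x \<bullet> mvec k j \<le> x \<bullet> mvec k i" if "j < k" for j
    using assms(2) that by (simp add: Max_ge)
  have "Max ((\<lambda>j. (t *\<^sub>R x) \<bullet> mvec k j) ` {..<k}) = (t *\<^sub>R x) \<bullet> mvec k i"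
    apply (rule Max_eqI)
    using ge t assms(3) by (auto intro: mult_left_mono)
  moreover have "t *\<^sub>R x \<in> ball 0 1" using assms(1) t
  proof -
    have "t * norm x \<le> t * 1" using assms(1) t by (intro mult_left_mono) auto
    moreover have "norm (t *\<^sub>R x) = t * norm x" using t by simp
    ultimately have "norm (t *\<^sub>R x) < 1" using t by linarith
    thus ?thesis by simp
  qed
  ultimately have "t *\<^sub>R x \<in> Omega k i" unfolding Omega_def by simp
  moreover have "dist (t *\<^sub>R x) x < e"
  proof -
    have "dist (t *\<^sub>R x) x = norm ((1 - t) *\<^sub>R x)" by (simp add: dist_norm algebra_simps norm_minus_commute)
    also have "\<dots> = (1-t) * norm x" using t by simp
    also have "\<dots> \<le> (1-t)" using t assms(1) by (simp add: mult_left_le)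
    finally show ?thesis using t e by linarith
  qed
  ultimately show "\<exists>y\<in>Omega k i. dist y x < e" by blast
qed


lemma powr_cmp:
  fixes a z b C s :: real
  assumes "0 < a" "a \<le> z" "z \<le> b" "b \<le> C * a"
  shows "z powr s \<le> C powr \<bar>s\<bar> * b powr s"
proof -
  have C1: "1 \<le> C"
  proof (rule ccontr)
    assume "\<not> 1 \<le> C"
    hence "C * a < 1 * a" using assms(1) by (intro mult_strict_right_mono) auto
    thus False using assms by linarith
  qed
  show ?thesis
  proof (cases "0 \<le> s")
    case True
    have "z powr s \<le> b powr s" using True assms by (intro powr_mono2) auto
    also have "\<dots> \<le> C powr \<bar>s\<bar> * b powr s"
      using ge_one_powr_ge_zero[OF C1, of "\<bar>s\<bar>"] by (simp add: mult_le_cancel_right1)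
    finally show ?thesis .
  next
    case False
    have "z powr s \<le> a powr s" using False assms by (intro powr_mono2') auto
    also have "a powr s = (b/a) powr (-s) * b powr s"
    proof -
      have "b > 0" "a > 0" using assms by auto
      thus ?thesis by (simp add: powr_minus_divide powr_divide)
    qed
    also have "(b/a) powr (-s) \<le> C powr (-s)"
      using False assms by (intro powr_mono2) (auto simp: field_simps)
    hence "(b/a) powr (-s) * b powr s \<le> C powr \<bar>s\<bar> * b powr s"
      using False by (intro mult_right_mono) auto
    finally show ?thesis .
  qed
qed

lemma powr_est:
  fixes a b C E \<rho> :: real
  assumes "1 \<le> a" "a \<le> b" "b \<le> C * a" "b - a \<le> E"
  shows "\<bar>1 / a powr \<rho> - 1 / b powr \<rho>\<bar> \<le> \<bar>\<rho>\<bar> * C powr \<bar>\<rho>+1\<bar> * E * b powr (-(\<rho>+1))"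
proof (cases "a = b")
  case True
  have "0 \<le> E" using assms True by simp
  thus ?thesis using True by simp
next
  case False
  hence ab: "a < b" using assms by simp
  have der: "\<And>t. a \<le> t \<Longrightarrow> t \<le> b \<Longrightarrow> ((\<lambda>t. t powr (-\<rho>)) has_real_derivative (-\<rho>) * t powr (-\<rho> - 1)) (at t)"
    using assms by (intro has_real_derivative_powr) auto
  obtain z where z: "a < z" "z < b" and eq: "b powr (-\<rho>) - a powr (-\<rho>) = (b - a) * ((-\<rho>) * z powr (-\<rho> - 1))"
    using MVT2[OF ab der] by blast
  have "\<bar>1 / a powr \<rho> - 1 / b powr \<rho>\<bar> = \<bar>b powr (-\<rho>) - a powr (-\<rho>)\<bar>"
    by (simp add: powr_minus_divide)
  also have "\<dots> = (b - a) * (\<bar>\<rho>\<bar> * z powr (-(\<rho>+1)))"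
    using eq ab by (simp add: abs_mult)
  also have "\<dots> \<le> E * (\<bar>\<rho>\<bar> * (C powr \<bar>-(\<rho>+1)\<bar> * b powr (-(\<rho>+1))))"
    using assms ab z powr_cmp[of a z b C "-(\<rho>+1)"]
    by (intro mult_mono mult_left_mono) auto
  moreover have e: "\<bar>-\<rho>-1\<bar> = \<bar>\<rho>+1\<bar>" by linarith
  ultimately show ?thesis by (simp add: e mult_ac)
qed



lemma sqrt_ge_abs: "\<bar>z\<bar> \<le> sqrt (1 + z^2)"
proof -
  have "sqrt (z^2) \<le> sqrt (1 + z^2)" by (rule real_sqrt_le_mono) simp
  thus ?thesis by simp
qed

lemma abs_est:
  fixes q lam sig r a b n L S :: real
  assumes q: "q > 0" and lam: "lam > 0" "lam \<le> L" and sig: "sig > 0" "sig \<le> S"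
    and r: "r = 1 - sig*q" "0 \<le> r" and n: "0 \<le> n" "n \<le> 1" and a: "a \<ge> q" and b: "b \<ge> 0"
    and bb: "b^2 = a^2 + (1-r^2)*(1-n^2)" and tri: "1 - n \<le> (1-r) + a"
  shows "lam/q \<le> sqrt (1 + a^2/(q^2/lam)^2)"
    and "sqrt (1 + b^2/(q^2/lam)^2) \<le> sqrt (1 + 4*(S^2+S)) * sqrt (1 + a^2/(q^2/lam)^2)"
    and "sqrt (1 + b^2/(q^2/lam)^2) - sqrt (1 + a^2/(q^2/lam)^2) \<le> 4*(S^2*L + S*L)/q"
proof -
  define t where "t = lam/q^2"
  have t0: "t > 0" unfolding t_def using q lam by simp
  have sa: "a^2/(q^2/lam)^2 = (a*t)^2" "b^2/(q^2/lam)^2 = (b*t)^2" unfolding t_def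
    by (simp_all add: power_divide power_mult_distrib)
  define di where "di = sqrt (1 + (a*t)^2)"
  define ds where "ds = sqrt (1 + (b*t)^2)"
  have a0: "a > 0" using a q by linarith
  have di_at: "a*t \<le> di" unfolding di_def using sqrt_ge_abs[of "a*t"] a0 t0 by simp
  have "q * t \<le> a * t" using a t0 by (intro mult_right_mono) auto
  moreover have "q * t = lam / q" unfolding t_def using q by (simp add: power2_eq_square)
  ultimately have di_lb: "lam/q \<le> di" using di_at by linarith
  have di1: "1 \<le> di" unfolding di_def by simp
  have di2: "di^2 = 1 + (a*t)^2" unfolding di_def by simp
  have ds2: "ds^2 = 1 + (b*t)^2" unfolding ds_def by simp
  have omr: "1 - r = sig * q" using r by simp
  have omr0: "0 \<le> 1 - r" using sig q omr by simp
  have omn0: "0 \<le> 1 - n" using n by simp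
  have r1: "r \<le> 1" using omr0 by simp
  have "(1-r^2)*(1-n^2) = ((1-r)*(1-n))*((1+r)*(1+n))" by (simp add: algebra_simps power2_eq_square)
  also have "\<dots> \<le> ((1-r)*(1-n))*4"
  proof (intro mult_left_mono)
    have "(1+r)*(1+n) \<le> 2*2" using r n r1 by (intro mult_mono) auto
    thus "(1+r)*(1+n) \<le> 4" by simp
    show "0 \<le> (1-r)*(1-n)" using omr0 omn0 by simp
  qed
  finally have d1: "(1-r^2)*(1-n^2) \<le> 4*((1-r)*(1-n))" by simp
  have d2: "(1-r)*(1-n) \<le> (1-r)^2 + (1-r)*a"
    using mult_left_mono[OF tri omr0] by (simp add: algebra_simps power2_eq_square)
  have S0: "0 \<le> S" using sig by simp
  have omra: "1 - r \<le> S * a"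
  proof -
    have "sig * q \<le> S * q" using sig q by (intro mult_right_mono) auto
    also have "\<dots> \<le> S * a" using S0 a by (intro mult_left_mono) auto
    finally show ?thesis using omr by simp
  qed
  have "(1-r)^2 \<le> (S*a)^2" using omra omr0 by (intro power_mono) auto
  moreover have "(1-r)*a \<le> (S*a)*a" using omra a0 by (intro mult_right_mono) auto
  ultimately have d3: "(1-r)*(1-n) \<le> (S^2+S)*a^2" using d2 by (simp add: algebra_simps power2_eq_square)
  have diff: "ds^2 - di^2 = (1-r^2)*(1-n^2)*t^2" using ds2 di2 bb by (simp add: algebra_simps power_mult_distrib)
  have "(1-r^2)*(1-n^2)*t^2 \<le> 4*((S^2+S)*a^2)*t^2"
    using d1 d3 by (intro mult_right_mono) auto
  also have "\<dots> = 4*(S^2+S)*(a*t)^2" by (simp add: power_mult_distrib)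
  also have "\<dots> \<le> 4*(S^2+S)*di^2" using di_at a0 t0 S0
    by (intro mult_left_mono power_mono) auto
  finally have "ds^2 \<le> (1 + 4*(S^2+S))*di^2" using diff by (simp add: algebra_simps)
  hence "sqrt (ds^2) \<le> sqrt ((1 + 4*(S^2+S))*di^2)" by (rule real_sqrt_le_mono)
  hence C1: "ds \<le> sqrt (1 + 4*(S^2+S)) * di" using di1 by (simp add: real_sqrt_mult ds_def)
  have ds_ge: "di \<le> ds"
  proof -
    have "0 \<le> (1-r^2)*(1-n^2)*t^2" using d1 omr0 omn0 r r1 n
      by (intro mult_nonneg_nonneg) (auto simp: power_le_one)
    hence "di^2 \<le> ds^2" using diff by simp
    moreover have "0 \<le> ds" unfolding ds_def by simp
    ultimately show ?thesis by (rule power2_le_imp_le)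
  qed
  have "ds - di \<le> (ds^2 - di^2)/di"
  proof -
    have "(ds - di) * di \<le> (ds - di) * (ds + di)" using ds_ge di1 by (intro mult_left_mono) auto
    also have "\<dots> = ds^2 - di^2" by (simp add: algebra_simps power2_eq_square)
    finally show ?thesis using di1 by (simp add: field_simps)
  qed
  also have "(ds^2 - di^2)/di \<le> 4*((1-r)^2*t^2)/di + 4*((1-r)*a*t^2)/di"
  proof -
    have "ds^2 - di^2 \<le> 4*((1-r)^2*t^2) + 4*((1-r)*a*t^2)"
    proof -
      have "ds^2 - di^2 \<le> 4*((1-r)^2 + (1-r)*a)*t^2"
        unfolding diff using d1 d2 by (intro mult_right_mono) auto
      thus ?thesis by (simp add: algebra_simps)
    qed
    thus ?thesis using di1 by (simp add: divide_right_mono add_divide_distrib[symmetric])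
  qed
  also have "4*((1-r)^2*t^2)/di \<le> 4*(S^2*L)/q"
  proof -
    have "(1-r)^2*t^2/di \<le> (1-r)^2*t^2/(lam/q)"
      using di_lb q lam di1 by (intro divide_left_mono) auto
    also have "\<dots> = sig^2 * lam / q" unfolding omr t_def using q lam
      by (simp add: field_simps power2_eq_square)
    also have "\<dots> \<le> S^2 * L / q" using sig lam q
      by (intro divide_right_mono mult_mono power_mono) auto
    finally show ?thesis by simp
  qed
  also have "4*((1-r)*a*t^2)/di \<le> 4*(S*L)/q"
  proof -
    have "(1-r)*a*t^2/di = ((1-r)*t) * ((a*t)/di)" by (simp add: power2_eq_square)
    also have "\<dots> \<le> ((1-r)*t) * 1" using di_at di1 omr0 t0
      by (intro mult_left_mono) auto
    also have "\<dots> = sig * lam / q" unfolding omr t_def using q by (simp add: power2_eq_square)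
    also have "\<dots> \<le> S * L / q" using sig lam q by (intro divide_right_mono mult_mono) auto
    finally show ?thesis by simp
  qed
  finally have D: "ds - di \<le> 4*(S^2*L + S*L)/q" by (simp add: algebra_simps add_divide_distrib)
  show "lam/q \<le> sqrt (1 + a^2/(q^2/lam)^2)" using di_lb unfolding sa di_def .
  show "sqrt (1 + b^2/(q^2/lam)^2) \<le> sqrt (1 + 4*(S^2+S)) * sqrt (1 + a^2/(q^2/lam)^2)"
    using C1 unfolding sa di_def ds_def .
  show "sqrt (1 + b^2/(q^2/lam)^2) - sqrt (1 + a^2/(q^2/lam)^2) \<le> 4*(S^2*L + S*L)/q"
    using D unfolding sa di_def ds_def .
qed



lemma sep_lemma:
  assumes k: "k \<ge> 2" and i: "i < k" and x: "x \<in> cball (0::real^3) 1" and nx: "x \<notin> closure (Omega k i)"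
    and r: "3/4 \<le> r"
  shows "1/(real k)^2 \<le> (norm (x - r *\<^sub>R mvec k i))^2"
proof -
  define A where "A = (\<lambda>j. x \<bullet> mvec k j) ` {..<k}"
  have fA: "finite A" "A \<noteq> {}" unfolding A_def using i by auto
  have ne: "x \<bullet> mvec k i \<noteq> Max A" using in_closure_Omega[OF x _ i] nx unfolding A_def by blast
  have le: "x \<bullet> mvec k i \<le> Max A" using fA i unfolding A_def by (intro Max_ge) auto
  have "Max A \<in> A" using fA by (rule Max_in)
  then obtain j where j: "j < k" "x \<bullet> mvec k j = Max A" unfolding A_def by auto
  have lt: "x \<bullet> mvec k i < x \<bullet> mvec k j" using ne le j by simp
  hence ij: "i \<noteq> j" by auto
  have g: "r^2 * (1 - mvec k i \<bullet> mvec k j) / 2 \<le> (norm (x - r *\<^sub>R mvec k i))^2"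
    using r by (intro geom_sep[OF mvec_norm mvec_norm lt]) simp
  have "mvec k i \<bullet> mvec k j \<le> cos (2*pi/real k)"
    unfolding mvec_inner using cos_angle_bound[OF k i j(1) ij] .
  hence c: "4/(real k)^2 \<le> 1 - mvec k i \<bullet> mvec k j" using one_minus_cos_bound[OF k] by linarith
  have r2: "1/2 \<le> r^2"
  proof -
    have "(3/4)^2 \<le> r^2" using r by (intro power_mono) auto
    thus ?thesis by (simp add: power2_eq_square)
  qed
  have "1/(real k)^2 = (1/2) * (4/(real k)^2) / 2" by simp
  also have "\<dots> \<le> r^2 * (1 - mvec k i \<bullet> mvec k j) / 2"
    using r2 c by (intro divide_right_mono mult_mono) auto
  finally show ?thesis using g by linarith
qed

lemma closure_Omega_sub: "closure (Omega k i) \<subseteq> cball 0 1"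
  by (rule closure_minimal) (auto simp: Omega_def)

lemma omega_part:
  fixes x m :: "real^3"
  assumes "0 \<le> r" "r \<le> 1" "norm x \<le> 1" "norm m = 1" "eps > 0"
  shows "dfun eps r m x \<le> dstar eps r m x" "(1-r)/eps \<le> dstar eps r m x"
proof -
  have id: "(norm (r *\<^sub>R x - m))^2 = (norm (x - r *\<^sub>R m))^2 + (1 - r^2)*(1 - (norm x)^2)"
    using geom_ident assms by blast
  have "0 \<le> (1 - r^2)*(1 - (norm x)^2)" using assms
    by (intro mult_nonneg_nonneg) (auto simp: power_le_one)
  hence "(norm (x - r *\<^sub>R m))^2 / eps^2 \<le> (norm (r *\<^sub>R x - m))^2 / eps^2"
    using id by (intro divide_right_mono) auto
  thus "dfun eps r m x \<le> dstar eps r m x" unfolding dfun_def dstar_def by simp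
  have "norm m \<le> norm (r *\<^sub>R x) + norm (r *\<^sub>R x - m)" using norm_triangle_ineq4[of "r *\<^sub>R x" m] norm_minus_commute[of "r *\<^sub>R x" m] by (metis norm_diff_triangle_ineq add.commute diff_add_cancel norm_triangle_ineq)
  moreover have "norm (r *\<^sub>R x) \<le> r" using assms by (simp add: mult_left_le)
  ultimately have b: "1 - r \<le> norm (r *\<^sub>R x - m)" using assms by simp
  have "(1-r)/eps \<le> norm (r *\<^sub>R x - m)/eps" using b assms by (intro divide_right_mono) auto
  also have "\<dots> = \<bar>norm (r *\<^sub>R x - m)/eps\<bar>" using assms by simp
  also have "\<dots> \<le> sqrt (1 + (norm (r *\<^sub>R x - m)/eps)^2)" by (rule sqrt_ge_abs)
  finally show "(1-r)/eps \<le> dstar eps r m x" unfolding dstar_def by (simp add: power_divide)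
qed



lemma pointwise:
  fixes lamstar sigstar mu lam sig :: real and x :: "real^3"
  assumes ls: "lamstar > 0" "sigstar > 0" and mu: "0 < mu" "mu < min (1/4) (1/(64* sigstar^2))"
    and lam: "lam \<in> {lamstar/2..2 * lamstar}" and sig: "sig \<in> {sigstar/2..2 * sigstar}"
    and i: "i < nat \<lfloor>1 / sqrt mu\<rfloor>"
  defines "k \<equiv> nat \<lfloor>1 / sqrt mu\<rfloor>" and "eps \<equiv> mu / lam" and "r \<equiv> 1 - sig * sqrt mu"
  shows "x \<in> cball 0 1 - closure (Omega k i) \<Longrightarrow>
      (lamstar/2) / sqrt mu \<le> dfun eps r (mvec k i) x \<and> dfun eps r (mvec k i) x \<le> dstar eps r (mvec k i) x
      \<and> dstar eps r (mvec k i) x \<le> sqrt (1 + 4*((2* sigstar)^2+2* sigstar)) * dfun eps r (mvec k i) x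
      \<and> dstar eps r (mvec k i) x - dfun eps r (mvec k i) x \<le> 4*((2* sigstar)^2*(2*lamstar) + (2* sigstar)*(2*lamstar))/sqrt mu"
    and "x \<in> closure (Omega k i) \<Longrightarrow> dfun eps r (mvec k i) x \<le> dstar eps r (mvec k i) x
      \<and> (sigstar*lamstar/4) / sqrt mu \<le> dstar eps r (mvec k i) x"
proof -
  define q where "q = sqrt mu"
  have q0: "q > 0" unfolding q_def using mu by simp
  have mq: "mu = q^2" unfolding q_def using mu by simp
  have "(2*q)^2 < 1^2" using mu mq by (simp add: power_mult_distrib)
  hence q2: "2*q < 1" by (rule power_less_imp_less_base) simp
  have "mu * (64 * sigstar^2) < 1" using mu ls by (simp add: field_simps)
  hence "(8* sigstar*q)^2 < 1^2" using mq by (simp add: power_mult_distrib algebra_simps)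
  hence q8: "8* sigstar*q < 1" by (rule power_less_imp_less_base) simp
  have sq: "sig * q \<le> 2* sigstar*q" using sig q0 by (intro mult_right_mono) auto
  have r34: "3/4 \<le> r" unfolding r_def q_def[symmetric] using sq q8 by linarith
  have r1: "r \<le> 1" unfolding r_def q_def[symmetric] using sig ls q0 by simp
  have sig0: "sig > 0" and lam0: "lam > 0" using sig lam ls by auto
  have "1/q > 2" using q2 q0 by (simp add: field_simps)
  hence "(2::int) \<le> \<lfloor>1/q\<rfloor>" by (simp add: le_floor_iff)
  hence k2: "k \<ge> 2" unfolding k_def q_def[symmetric] by linarith
  have kq: "real k \<le> 1/q" unfolding k_def q_def[symmetric] using q0 by simp
  have "(real k)^2 \<le> (1/q)^2" using kq by (intro power_mono) auto
  hence "mu * (real k)^2 \<le> 1" using mq q0 by (simp add: power_divide field_simps)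
  hence muk: "mu \<le> 1/(real k)^2" using k2 by (simp add: field_simps)
  have epsq: "eps = q^2/lam" unfolding eps_def mq ..
  have eps0: "eps > 0" unfolding eps_def using mu lam0 by simp
  show "x \<in> cball 0 1 - closure (Omega k i) \<Longrightarrow>
      (lamstar/2) / sqrt mu \<le> dfun eps r (mvec k i) x \<and> dfun eps r (mvec k i) x \<le> dstar eps r (mvec k i) x
      \<and> dstar eps r (mvec k i) x \<le> sqrt (1 + 4*((2* sigstar)^2+2* sigstar)) * dfun eps r (mvec k i) x
      \<and> dstar eps r (mvec k i) x - dfun eps r (mvec k i) x \<le> 4*((2* sigstar)^2*(2*lamstar) + (2* sigstar)*(2*lamstar))/sqrt mu"
  proof -
    assume xo: "x \<in> cball 0 1 - closure (Omega k i)"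
    define a where "a = norm (x - r *\<^sub>R mvec k i)"
    define b where "b = norm (r *\<^sub>R x - mvec k i)"
    have sep: "1/(real k)^2 \<le> a^2" unfolding a_def
      using sep_lemma[OF k2 _ _ _ r34] xo i unfolding k_def by auto
    have "q^2 \<le> a^2" using sep muk mq by linarith
    hence aq: "q \<le> a" unfolding a_def by (rule power2_le_imp_le) simp
    have nx: "norm x \<le> 1" using xo by auto
    have bb: "b^2 = a^2 + (1-r^2)*(1-(norm x)^2)" unfolding a_def b_def
      by (rule geom_ident[OF mvec_norm])
    have "r = norm (r *\<^sub>R mvec k i)" using r34 by (simp add: mvec_norm)
    also have "\<dots> \<le> norm x + a" unfolding a_def
      using norm_triangle_sub[of "r *\<^sub>R mvec k i" x] by (simp add: norm_minus_commute)
    finally have tri: "1 - norm x \<le> (1-r) + a" by simp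
    have rr: "r = 1 - sig*q" unfolding r_def q_def ..
    have lamL: "lam \<le> 2*lamstar" and sigS: "sig \<le> 2* sigstar" using lam sig by auto
    have r0: "0 \<le> r" using r34 by linarith
    have b0: "0 \<le> b" unfolding b_def by simp
    note E = abs_est[OF q0 lam0 lamL sig0 sigS rr r0 norm_ge_zero nx aq b0 bb tri]
    have fd: "dfun eps r (mvec k i) x = sqrt (1 + a^2/(q^2/lam)^2)" unfolding dfun_def a_def epsq ..
    have fs: "dstar eps r (mvec k i) x = sqrt (1 + b^2/(q^2/lam)^2)" unfolding dstar_def b_def epsq ..
    have "(lamstar/2)/q \<le> lam/q" using lam q0 by (intro divide_right_mono) auto
    moreover have "dfun eps r (mvec k i) x \<le> dstar eps r (mvec k i) x"
      using omega_part(1)[OF _ r1 nx mvec_norm eps0] r34 by simp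
    ultimately show ?thesis using E(1) E(2) E(3) unfolding fd fs q_def[symmetric] by linarith
  qed
  show "x \<in> closure (Omega k i) \<Longrightarrow> dfun eps r (mvec k i) x \<le> dstar eps r (mvec k i) x
      \<and> (sigstar*lamstar/4) / sqrt mu \<le> dstar eps r (mvec k i) x"
  proof -
    assume xc: "x \<in> closure (Omega k i)"
    hence nx: "norm x \<le> 1" using closure_Omega_sub by force
    have r0: "0 \<le> r" using r34 by linarith
    note O = omega_part[OF r0 r1 nx mvec_norm[of k i] eps0]
    have "(1-r)/eps = sig*lam/q" unfolding r_def epsq q_def[symmetric] using q0 lam0
      by (simp add: field_simps power2_eq_square)
    moreover have "(sigstar/2)*(lamstar/2) \<le> sig*lam" using sig lam ls
      by (intro mult_mono) auto
    hence "(sigstar*lamstar/4)/q \<le> sig*lam/q" using q0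
      by (intro divide_right_mono) auto
    ultimately show ?thesis using O unfolding q_def by linarith
  qed
qed



lemma dfun_ge1: "1 \<le> dfun eps r m x" unfolding dfun_def by simp

theorem lemmaA3:
  fixes lamstar sigstar :: real
  assumes "lamstar > 0" and "sigstar > 0"
  shows "\<exists>C0>0. \<exists>C1>0. \<exists>C2>0. \<exists>mu0>0.
    (\<forall>mu lam sig i x.
       0 < mu \<and> mu < mu0 \<and> lam \<in> {lamstar/2..2 * lamstar} \<and> sig \<in> {sigstar/2..2 * sigstar}
       \<and> i < nat \<lfloor>1 / sqrt mu\<rfloor> \<longrightarrow>
       (let k = nat \<lfloor>1 / sqrt mu\<rfloor>; eps = mu / lam; r = 1 - sig * sqrt mu;
            m = mvec k i; di = dfun eps r m x; ds = dstar eps r m x in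
         (x \<in> cball 0 1 - closure (Omega k i) \<longrightarrow>
            C0 / sqrt mu \<le> di \<and> di \<le> ds \<and> ds \<le> C1 * di) \<and>
         (x \<in> closure (Omega k i) \<longrightarrow> di \<le> ds \<and> C2 / sqrt mu \<le> ds)))
    \<and> (\<forall>\<rho>::real. \<exists>C>0. \<forall>mu lam sig i x.
       0 < mu \<and> mu < mu0 \<and> lam \<in> {lamstar/2..2 * lamstar} \<and> sig \<in> {sigstar/2..2 * sigstar}
       \<and> i < nat \<lfloor>1 / sqrt mu\<rfloor> \<longrightarrow>
       (let k = nat \<lfloor>1 / sqrt mu\<rfloor>; eps = mu / lam; r = 1 - sig * sqrt mu;
            m = mvec k i; di = dfun eps r m x; ds = dstar eps r m x in
         x \<in> cball 0 1 - closure (Omega k i) \<longrightarrow>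
            \<bar>1 / di powr \<rho> - 1 / ds powr \<rho>\<bar> \<le> C / (sqrt mu * ds powr (\<rho> + 1))))"
proof -
  define C1 where "C1 = sqrt (1 + 4*((2* sigstar)^2+2* sigstar))"
  define D where "D = 4*((2* sigstar)^2*(2*lamstar) + (2* sigstar)*(2*lamstar))"
  define mu0 where "mu0 = min (1/4) (1/(64* sigstar^2))"
  have C1p: "C1 > 0" unfolding C1_def using assms by (simp add: add_pos_nonneg)
  have D0: "D \<ge> 0" unfolding D_def using assms by simp
  have mu0p: "mu0 > 0" unfolding mu0_def using assms by simp
  note P = pointwise[OF assms, folded C1_def D_def mu0_def]
  have part1: "\<forall>mu lam sig i x.
       0 < mu \<and> mu < mu0 \<and> lam \<in> {lamstar/2..2 * lamstar} \<and> sig \<in> {sigstar/2..2 * sigstar}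
       \<and> i < nat \<lfloor>1 / sqrt mu\<rfloor> \<longrightarrow>
       (let k = nat \<lfloor>1 / sqrt mu\<rfloor>; eps = mu / lam; r = 1 - sig * sqrt mu;
            m = mvec k i; di = dfun eps r m x; ds = dstar eps r m x in
         (x \<in> cball 0 1 - closure (Omega k i) \<longrightarrow>
            (lamstar/2) / sqrt mu \<le> di \<and> di \<le> ds \<and> ds \<le> C1 * di) \<and>
         (x \<in> closure (Omega k i) \<longrightarrow> di \<le> ds \<and> (sigstar*lamstar/4) / sqrt mu \<le> ds))"
    unfolding Let_def using P by blast
  have part2: "\<exists>C>0. \<forall>mu lam sig i x.
       0 < mu \<and> mu < mu0 \<and> lam \<in> {lamstar/2..2 * lamstar} \<and> sig \<in> {sigstar/2..2 * sigstar}
       \<and> i < nat \<lfloor>1 / sqrt mu\<rfloor> \<longrightarrow>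
       (let k = nat \<lfloor>1 / sqrt mu\<rfloor>; eps = mu / lam; r = 1 - sig * sqrt mu;
            m = mvec k i; di = dfun eps r m x; ds = dstar eps r m x in
         x \<in> cball 0 1 - closure (Omega k i) \<longrightarrow>
            \<bar>1 / di powr \<rho> - 1 / ds powr \<rho>\<bar> \<le> C / (sqrt mu * ds powr (\<rho> + 1)))" for \<rho>
  proof (intro exI[of _ "\<bar>\<rho>\<bar> * C1 powr \<bar>\<rho>+1\<bar> * D + 1"] conjI allI impI)
    have "0 \<le> \<bar>\<rho>\<bar> * C1 powr \<bar>\<rho>+1\<bar> * D" using D0 by simp
    thus "0 < \<bar>\<rho>\<bar> * C1 powr \<bar>\<rho>+1\<bar> * D + 1" by linarith
    fix mu lam sig :: real and i :: nat and x :: "real^3"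
    assume h: "0 < mu \<and> mu < mu0 \<and> lam \<in> {lamstar/2..2 * lamstar} \<and> sig \<in> {sigstar/2..2 * sigstar}
       \<and> i < nat \<lfloor>1 / sqrt mu\<rfloor>"
    define di where "di = dfun (mu/lam) (1 - sig * sqrt mu) (mvec (nat \<lfloor>1 / sqrt mu\<rfloor>) i) x"
    define ds where "ds = dstar (mu/lam) (1 - sig * sqrt mu) (mvec (nat \<lfloor>1 / sqrt mu\<rfloor>) i) x"
    show "let k = nat \<lfloor>1 / sqrt mu\<rfloor>; eps = mu / lam; r = 1 - sig * sqrt mu;
            m = mvec k i; di = dfun eps r m x; ds = dstar eps r m x in
         x \<in> cball 0 1 - closure (Omega k i) \<longrightarrow>
            \<bar>1 / di powr \<rho> - 1 / ds powr \<rho>\<bar> \<le> (\<bar>\<rho>\<bar> * C1 powr \<bar>\<rho>+1\<bar> * D + 1) / (sqrt mu * ds powr (\<rho> + 1))"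
      unfolding Let_def di_def[symmetric] ds_def[symmetric]
    proof
      assume xo: "x \<in> cball 0 1 - closure (Omega (nat \<lfloor>1 / sqrt mu\<rfloor>) i)"
      have Q: "di \<le> ds" "ds \<le> C1 * di" "ds - di \<le> D / sqrt mu"
        using P(1)[of mu lam sig i x] h xo unfolding di_def ds_def mu0_def by auto
      have q: "sqrt mu > 0" using h by simp
      have d1: "1 \<le> di" unfolding di_def by (rule dfun_ge1)
      have "\<bar>1 / di powr \<rho> - 1 / ds powr \<rho>\<bar> \<le> \<bar>\<rho>\<bar> * C1 powr \<bar>\<rho>+1\<bar> * (D / sqrt mu) * ds powr (-(\<rho>+1))"
        by (rule powr_est[OF d1 Q])
      also have "\<dots> = (\<bar>\<rho>\<bar> * C1 powr \<bar>\<rho>+1\<bar> * D) * (ds powr (-(\<rho>+1)) / sqrt mu)" by simp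
      also have "\<dots> \<le> (\<bar>\<rho>\<bar> * C1 powr \<bar>\<rho>+1\<bar> * D + 1) * (ds powr (-(\<rho>+1)) / sqrt mu)"
        using q by (intro mult_right_mono) auto
      also have "\<dots> = (\<bar>\<rho>\<bar> * C1 powr \<bar>\<rho>+1\<bar> * D + 1) / (sqrt mu * ds powr (\<rho> + 1))"
        unfolding powr_minus_divide[of ds "\<rho>+1"] by simp
      finally show "\<bar>1 / di powr \<rho> - 1 / ds powr \<rho>\<bar> \<le> (\<bar>\<rho>\<bar> * C1 powr \<bar>\<rho>+1\<bar> * D + 1) / (sqrt mu * ds powr (\<rho> + 1))" .
    qed
  qed
  show ?thesis
    apply (rule exI[of _ "lamstar/2"], rule conjI, simp add: assms)
    apply (rule exI[of _ C1], rule conjI, rule C1p)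
    apply (rule exI[of _ "sigstar*lamstar/4"], rule conjI, simp add: assms)
    apply (rule exI[of _ mu0], rule conjI, rule mu0p)
    using part1 part2 by blast
qed

end
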